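(* Let $\vec E$ be as in the context and fix an edge $b\in\Lambda^*$. The map $J_\Lambda\mapsto F_b(J_\Lambda)$ on $\mathbb{R}^{\Lambda^*}\setminus\mathcal C$ is a piecewise affine function with $$\frac{\partial F_b}{\partial J_e}(J_\Lambda)=\begin{cases}2\sigma_e(J_\Lambda)&\text{if } e\in\partial\mathcal D_b(J_\Lambda),\\ 0&\text{otherwise.}\end{cases}$$ Furthermore, this map extends uniquely to a continuous function on $\mathbb{R}^{\Lambda^*}$.
   Context: $\Lambda\subset\mathbb{Z}^d$ is a finite box, $\Lambda^*$ its set of nearest-neighbour edges. For spins $\eta$ and $e=\{x,y\}$, $\eta_e=\eta_x\eta_y$; $\mathcal S_\Lambda\subset\{-1,1\}^{\Lambda^*}$ is the set of edge configurations induced by spin configurations on $\Lambda$. $H_{\Lambda,J}(\eta)=-\sum_{e\in\Lambda^*}J_e\eta_e$ for $J_\Lambda\in\mathbb{R}^{\Lambda^*}$. $\vec E=(E(\eta,\eta'))_{\eta,\eta'\in\mathcal S_\Lambda}$ is a family of reals with $E(\eta,\eta)=0$ and $E(\eta,\eta'')=E(\eta,\eta')+E(\eta',\eta'')$. Critical set $\mathcal C=\bigcup_{\eta\ne\eta'}\{J_\Lambda:\sum_eJ_e(\eta_e-\eta'_e)=E(\eta,\eta')\}$. For $J_\Lambda\notin\mathcal C$, $\eta\prec\eta'$ iff $E(\eta,\eta')+H_{\Lambda,J}(\eta)-H_{\Lambda,J}(\eta')<0$, which is a strict total order on $\mathcal S_\Lambda$; $\sigma(J_\Lambda)$ is the $\prec$-minimal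 element (ground state map), and $\sigma^{\pm,b}(J_\Lambda)$ the $\prec$-minimal element among $\eta$ with $\eta_b=\pm1$. The critical droplet boundary is $\partial\mathcal D_b(J_\Lambda)=\{e\in\Lambda^*:\sigma^{+,b}_e(J_\Lambda)\ne\sigma^{-,b}_e(J_\Lambda)\}$, and the flexibility of $b$ is $$F_b(J_\Lambda)=\Big|-\sum_{e\in\Lambda^*}J_e\big(\sigma^{+,b}_e(J_\Lambda)-\sigma^{-,b}_e(J_\Lambda)\big)+E\big(\sigma^{+,b}(J_\Lambda),\sigma^{-,b}(J_\Lambda)\big)\Big|.$$ *)

theory Defs
  imports "HOL-Analysis.Analysis"
begin

text \<open>Sites are points of Z^d, represented as int^'d (d = CARD('d) \<ge> 1). Edge configurations and couplings are
  real-valued functions on edges (set to 0 outside the edge set of the box).\<close>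

type_synonym 'd site = "int ^ 'd"
type_synonym 'd edge = "'d site set"
type_synonym 'd econf = "'d edge \<Rightarrow> real"

definition zbox :: "'d::finite site \<Rightarrow> 'd site \<Rightarrow> 'd site set" where
  "zbox lo hi = {x. \<forall>i. lo $ i \<le> x $ i \<and> x $ i \<le> hi $ i}"

definition nn_edges :: "'d::finite site set \<Rightarrow> 'd edge set" where
  "nn_edges L = {{x, y} | x y. x \<in> L \<and> y \<in> L \<and> (\<Sum>i\<in>UNIV. \<bar>x $ i - y $ i\<bar>) = 1}"

definition edge_configs :: "'d::finite site set \<Rightarrow> 'd econf set" where
  "edge_configs L = {(\<lambda>e. if e \<in> nn_edges L then (\<Prod>x\<in>e. s x) else 0) | s.
                       \<forall>x\<in>L. s x \<in> {-1, 1::real}}"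

definition consistent_E :: "'d::finite site set \<Rightarrow> ('d econf \<Rightarrow> 'd econf \<Rightarrow> real) \<Rightarrow> bool" where
  "consistent_E L E \<longleftrightarrow>
     (\<forall>\<eta>\<in>edge_configs L. E \<eta> \<eta> = 0) \<and>
     (\<forall>\<eta>\<in>edge_configs L. \<forall>\<eta>'\<in>edge_configs L. \<forall>\<eta>''\<in>edge_configs L.
        E \<eta> \<eta>'' = E \<eta> \<eta>' + E \<eta>' \<eta>'')"

definition hamiltonian :: "'d::finite site set \<Rightarrow> 'd econf \<Rightarrow> 'd econf \<Rightarrow> real" where
  "hamiltonian L J \<eta> = - (\<Sum>e\<in>nn_edges L. J e * \<eta> e)"

text \<open>The space R^{Lambda*}: couplings vanishing outside the edge set.\<close>
definition coupling_space :: "'d::finite site set \<Rightarrow> 'd econf set" where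
  "coupling_space L = {J. \<forall>e. e \<notin> nn_edges L \<longrightarrow> J e = 0}"

definition critical_set :: "'d::finite site set \<Rightarrow> ('d econf \<Rightarrow> 'd econf \<Rightarrow> real) \<Rightarrow> 'd econf set" where
  "critical_set L E = {J. \<exists>\<eta>\<in>edge_configs L. \<exists>\<eta>'\<in>edge_configs L. \<eta> \<noteq> \<eta>' \<and>
      (\<Sum>e\<in>nn_edges L. J e * (\<eta> e - \<eta>' e)) = E \<eta> \<eta>'}"

definition prec :: "'d::finite site set \<Rightarrow> ('d econf \<Rightarrow> 'd econf \<Rightarrow> real) \<Rightarrow> 'd econf
                      \<Rightarrow> 'd econf \<Rightarrow> 'd econf \<Rightarrow> bool" where
  "prec L E J \<eta> \<eta>' \<longleftrightarrow> E \<eta> \<eta>' + hamiltonian L J \<eta> - hamiltonian L J \<eta>' < 0"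

text \<open>The prec-minimal element of edge_configs L among those satisfying P
  (meaningful for J outside the critical set, where prec is a strict total order).\<close>
definition restr_min :: "'d::finite site set \<Rightarrow> ('d econf \<Rightarrow> 'd econf \<Rightarrow> real) \<Rightarrow> 'd econf
                          \<Rightarrow> ('d econf \<Rightarrow> bool) \<Rightarrow> 'd econf" where
  "restr_min L E J P = (THE \<eta>. \<eta> \<in> edge_configs L \<and> P \<eta> \<and>
      (\<forall>\<eta>'\<in>edge_configs L. P \<eta>' \<and> \<eta>' \<noteq> \<eta> \<longrightarrow> prec L E J \<eta> \<eta>'))"

definition ground_state :: "'d::finite site set \<Rightarrow> ('d econf \<Rightarrow> 'd econf \<Rightarrow> real) \<Rightarrow> 'd econf \<Rightarrow> 'd econf" where
  "ground_state L E J = restr_min L E J (\<lambda>_. True)"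

definition ground_state_b :: "'d::finite site set \<Rightarrow> ('d econf \<Rightarrow> 'd econf \<Rightarrow> real) \<Rightarrow> 'd edge
                               \<Rightarrow> real \<Rightarrow> 'd econf \<Rightarrow> 'd econf" where
  "ground_state_b L E b s J = restr_min L E J (\<lambda>\<eta>. \<eta> b = s)"

definition droplet_boundary :: "'d::finite site set \<Rightarrow> ('d econf \<Rightarrow> 'd econf \<Rightarrow> real) \<Rightarrow> 'd edge
                                 \<Rightarrow> 'd econf \<Rightarrow> 'd edge set" where
  "droplet_boundary L E b J = {e \<in> nn_edges L.
      ground_state_b L E b 1 J e \<noteq> ground_state_b L E b (-1) J e}"

definition flexibility :: "'d::finite site set \<Rightarrow> ('d econf \<Rightarrow> 'd econf \<Rightarrow> real) \<Rightarrow> 'd edge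
                            \<Rightarrow> 'd econf \<Rightarrow> real" where
  "flexibility L E b J = \<bar>- (\<Sum>e\<in>nn_edges L. J e * (ground_state_b L E b 1 J e - ground_state_b L E b (-1) J e))
                          + E (ground_state_b L E b 1 J) (ground_state_b L E b (-1) J)\<bar>"

definition piecewise_affine_on :: "'d::finite site set \<Rightarrow> 'd econf set \<Rightarrow> ('d econf \<Rightarrow> real) \<Rightarrow> bool" where
  "piecewise_affine_on L U f \<longleftrightarrow>
     (\<exists>A :: ('d econf \<times> real) set. finite A \<and>
        (\<forall>J\<in>U. \<exists>\<epsilon>>0. \<exists>(g, c)\<in>A. \<forall>J'\<in>U. (\<forall>e\<in>nn_edges L. \<bar>J' e - J e\<bar> < \<epsilon>) \<longrightarrow>
            f J' = c + (\<Sum>e\<in>nn_edges L. g e * J' e)))"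

end

theory Submission
  imports Defs
begin

lemma fin_zbox: "finite (zbox lo hi)"
proof -
  have "zbox lo hi \<subseteq> (\<lambda>f. \<chi> i. f i) ` (PiE UNIV (\<lambda>i. {lo$i..hi$i}))"
  proof
    fix x assume "x \<in> zbox lo hi"
    then have "(\<lambda>i. x $ i) \<in> PiE UNIV (\<lambda>i. {lo$i..hi$i})" by (auto simp: zbox_def)
    moreover have "x = (\<chi> i. (\<lambda>i. x $ i) i)" by simp
    ultimately show "x \<in> (\<lambda>f. \<chi> i. f i) ` (PiE UNIV (\<lambda>i. {lo$i..hi$i}))" by blast
  qed
  moreover have "finite (PiE (UNIV::'a set) (\<lambda>i. {lo$i..hi$i}))"
    by (rule finite_PiE) auto
  ultimately show ?thesis using finite_subset by blast
qed

lemma fin_nn: "finite L \<Longrightarrow> finite (nn_edges L)"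
proof -
  assume "finite L"
  have "nn_edges L \<subseteq> Pow L" by (auto simp: nn_edges_def)
  then show ?thesis using \<open>finite L\<close> finite_subset by blast
qed

lemma nn_form: "e \<in> nn_edges L \<Longrightarrow> \<exists>x y. e = {x,y} \<and> x \<noteq> y \<and> x \<in> L \<and> y \<in> L"
proof -
  assume "e \<in> nn_edges L"
  then obtain x y where h: "e = {x,y}" "x \<in> L" "y \<in> L" "(\<Sum>i\<in>UNIV. \<bar>x $ i - y $ i\<bar>) = 1"
    by (auto simp: nn_edges_def)
  have "x \<noteq> y" proof assume "x = y" then show False using h(4) by simp qed
  then show ?thesis using h by blast
qed

lemma ec_vals:
  assumes "\<eta> \<in> edge_configs L"
  shows "e \<in> nn_edges L \<Longrightarrow> \<eta> e = 1 \<or> \<eta> e = -1"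
    and "e \<notin> nn_edges L \<Longrightarrow> \<eta> e = 0"
proof -
  have "\<exists>s. \<eta> = (\<lambda>e. if e \<in> nn_edges L then (\<Prod>x\<in>e. s x) else 0) \<and> (\<forall>x\<in>L. s x \<in> {-1, 1::real})"
    using assms unfolding edge_configs_def by simp
  then obtain s where eta: "\<eta> = (\<lambda>e. if e \<in> nn_edges L then (\<Prod>x\<in>e. s x) else 0)"
    and s: "\<forall>x\<in>L. s x \<in> {-1, 1::real}" by (elim exE conjE)
  show "e \<notin> nn_edges L \<Longrightarrow> \<eta> e = 0" using eta by simp
  assume e: "e \<in> nn_edges L"
  then obtain x y where xy: "e = {x,y}" "x \<noteq> y" "x \<in> L" "y \<in> L" using nn_form by blast
  have "\<eta> e = s x * s y" unfolding eta using e xy by simp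
  moreover have "s x \<in> {-1,1}" "s y \<in> {-1,1}" using s xy by auto
  ultimately show "\<eta> e = 1 \<or> \<eta> e = -1" by auto
qed

lemma ec_abs: "\<eta> \<in> edge_configs L \<Longrightarrow> \<bar>\<eta> e\<bar> \<le> 1"
  using ec_vals[of \<eta> L e] by (cases "e \<in> nn_edges L") auto

lemma fin_ec:
  assumes "finite L"
  shows "finite (edge_configs L)"
proof -
  let ?N = "nn_edges L"
  have "edge_configs L \<subseteq> (\<lambda>f e. if e \<in> ?N then f e else 0) ` PiE ?N (\<lambda>_. {-1,1::real})"
  proof
    fix \<eta> assume h: "\<eta> \<in> edge_configs L"
    have "restrict \<eta> ?N \<in> PiE ?N (\<lambda>_. {-1,1::real})" using ec_vals(1)[OF h] by auto
    moreover have "\<eta> = (\<lambda>e. if e \<in> ?N then restrict \<eta> ?N e else 0)"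
      using ec_vals(2)[OF h] by (auto simp: fun_eq_iff)
    ultimately show "\<eta> \<in> (\<lambda>f e. if e \<in> ?N then f e else 0) ` PiE ?N (\<lambda>_. {-1,1::real})"
      by blast
  qed
  moreover have "finite (PiE ?N (\<lambda>_. {-1,1::real}))"
    using fin_nn[OF assms] by (intro finite_PiE) auto
  ultimately show ?thesis using finite_subset by blast
qed

lemma ec_b:
  assumes "b \<in> nn_edges L" "sg \<in> {1, -1::real}"
  shows "\<exists>\<eta>\<in>edge_configs L. \<eta> b = sg"
proof -
  obtain x y where xy: "b = {x,y}" "x \<noteq> y" "x \<in> L" "y \<in> L" using nn_form assms(1) by blast
  define s where "s = (\<lambda>z. if z = x then sg else (1::real))"
  define \<eta> where "\<eta> = (\<lambda>e. if e \<in> nn_edges L then (\<Prod>x\<in>e. s x) else 0)"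
  have "\<eta> \<in> edge_configs L" unfolding edge_configs_def \<eta>_def using assms(2)
    by (auto simp: s_def intro!: exI[of _ s] split: if_splits)
  moreover have "\<eta> b = sg" using assms xy by (simp add: \<eta>_def s_def)
  ultimately show ?thesis by blast
qed

lemma fin_pos_bound:
  assumes "finite S" "\<forall>x\<in>S. (0::real) < f x"
  shows "\<exists>\<delta>>0. \<forall>x\<in>S. \<delta> \<le> f x"
proof -
  let ?m = "Min (insert 1 (f ` S))"
  have "?m > 0" using assms by (subst Min_gr_iff) auto
  moreover have "\<forall>x\<in>S. ?m \<le> f x" using assms by auto
  ultimately show ?thesis by blast
qed

lemma cont_Min:
  fixes f :: "'a::topological_space \<Rightarrow> 'b \<Rightarrow> real"
  assumes "finite S" "S \<noteq> {}" "\<forall>\<eta>\<in>S. continuous_on U (\<lambda>J. f J \<eta>)"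
  shows "continuous_on U (\<lambda>J. Min (f J ` S))"
  using assms
proof (induction S rule: finite_ne_induct)
  case (singleton x) then show ?case by simp
next
  case (insert x F)
  have "(\<lambda>J. Min (f J ` insert x F)) = (\<lambda>J. min (f J x) (Min (f J ` F)))"
    using insert by (auto simp: fun_eq_iff)
  then show ?case using insert by (auto intro!: continuous_on_min)
qed


lemma sum_delta_mult:
  assumes "finite N" "e0 \<in> N"
  shows "(\<Sum>e\<in>N. (if e = e0 then t else 0) * (d e::real)) = t * d e0"
proof -
  have "(\<Sum>e\<in>N. (if e = e0 then t else 0) * d e) = (\<Sum>e\<in>N. if e = e0 then t * d e0 else 0)"
    by (rule sum.cong) auto
  also have "\<dots> = t * d e0" using assms by (simp add: sum.delta)
  finally show ?thesis .
qed

lemma dense_avoid: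
  fixes N :: "'a set" and P :: "(('a \<Rightarrow> real) \<times> real) set"
  assumes "finite P" "\<forall>(d,c)\<in>P. \<exists>e\<in>N. d e \<noteq> 0" "finite N"
  shows "open U \<Longrightarrow> J \<in> U \<Longrightarrow> (\<forall>e. e \<notin> N \<longrightarrow> J e = 0) \<Longrightarrow>
    \<exists>J'\<in>U. (\<forall>e. e \<notin> N \<longrightarrow> J' e = 0) \<and> (\<forall>(d,c)\<in>P. (\<Sum>e\<in>N. J' e * d e) \<noteq> c)"
  using assms(1,2)
proof (induction P arbitrary: U J rule: finite_induct)
  case empty
  then show ?case by blast
next
  case (insert x P)
  obtain d c where x: "x = (d, c)" by (cases x)
  obtain e0 where e0: "e0 \<in> N" "d e0 \<noteq> 0" using insert.prems(4) x by auto
  have "\<exists>J1\<in>U. (\<forall>e. e \<notin> N \<longrightarrow> J1 e = 0) \<and> (\<Sum>e\<in>N. J1 e * d e) \<noteq> c"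
  proof (cases "(\<Sum>e\<in>N. J e * d e) = c")
    case False
    then show ?thesis using insert.prems by blast
  next
    case True
    define p where "p = (\<lambda>(t::real) e'. J e' + (if e' = e0 then t else 0))"
    have cp: "continuous_on UNIV p"
    proof (intro continuous_on_coordinatewise_then_product)
      fix i show "continuous_on UNIV (\<lambda>t. p t i)"
      proof (cases "i = e0")
        case True
        then have eq: "(\<lambda>t. p t i) = (\<lambda>t. J i + t)" by (simp add: p_def)
        have c: "continuous_on UNIV (\<lambda>t::real. J i + t)"
          by (intro continuous_on_add continuous_on_const continuous_on_id)
        show ?thesis unfolding eq by (rule c)
      next
        case False
        then have eq2: "(\<lambda>t. p t i) = (\<lambda>t. J i)" by (simp add: p_def)
        show ?thesis unfolding eq2 by (rule continuous_on_const)
      qed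
    qed
    have obp: "\<forall>B. open B \<longrightarrow> open (p -` B)" using cp continuous_on_open_vimage[of UNIV p] by simp
    have op: "open (p -` U)" using obp insert.prems(1) by blast
    have zp: "0 \<in> p -` U" using insert.prems(2) by (simp add: p_def)
    obtain r where r: "r > 0" "ball 0 r \<subseteq> p -` U"
      using open_contains_ball[THEN iffD1, rule_format, OF op zp] by blast
    define t where "t = r / 2"
    have tb: "t \<in> ball 0 r" using r(1) by (simp add: t_def)
    have t1: "p t \<in> U" using r(2) tb by blast
    have t: "t \<noteq> 0" "p t \<in> U" using r(1) t1 by (auto simp: t_def)
    have "(\<Sum>e\<in>N. p t e * d e) = (\<Sum>e\<in>N. J e * d e) + (\<Sum>e\<in>N. (if e = e0 then t else 0) * d e)"
      by (simp add: p_def distrib_right sum.distrib)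
    also have "\<dots> = c + t * d e0" using True e0 assms(3) by (simp add: sum_delta_mult)
    finally have "(\<Sum>e\<in>N. p t e * d e) \<noteq> c" using t e0 by simp
    moreover have "\<forall>e. e \<notin> N \<longrightarrow> p t e = 0" using insert.prems(3) e0 by (auto simp: p_def)
    ultimately show ?thesis using t by blast
  qed
  then obtain J1 where J1: "J1 \<in> U" "\<forall>e. e \<notin> N \<longrightarrow> J1 e = 0" "(\<Sum>e\<in>N. J1 e * d e) \<noteq> c"
    by blast
  define U' where "U' = U \<inter> (\<lambda>J. \<Sum>e\<in>N. J e * d e) -` (- {c})"
  define f where "f = (\<lambda>J::'a \<Rightarrow> real. \<Sum>e\<in>N. J e * d e)"
  have "continuous_on UNIV f" unfolding f_def
    by (intro continuous_intros continuous_on_product_coordinates)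
  then have ob: "\<forall>B. open B \<longrightarrow> open (f -` B)" using continuous_on_open_vimage[of UNIV f] by simp
  have oc: "open (- {c})" by (intro open_Compl closed_singleton)
  have "open (f -` (- {c}))" using ob oc by blast
  then have "open ((\<lambda>J::'a \<Rightarrow> real. \<Sum>e\<in>N. J e * d e) -` (- {c}))"
    unfolding f_def .
  then have "open U'" using insert.prems(1) by (simp add: U'_def open_Int)
  moreover have "J1 \<in> U'" using J1 by (simp add: U'_def)
  ultimately obtain J' where "J' \<in> U'" "\<forall>e. e \<notin> N \<longrightarrow> J' e = 0"
    "\<forall>(d,c)\<in>P. (\<Sum>e\<in>N. J' e * d e) \<noteq> c"
    using insert.IH[of U' J1] J1(2) insert.prems(4) by auto
  then show ?case using x by (auto simp: U'_def)
qed

locale flexctx =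
  fixes L :: "'d::finite site set" and E :: "'d econf \<Rightarrow> 'd econf \<Rightarrow> real" and b :: "'d edge"
  assumes finL: "finite L" and cons: "consistent_E L E" and bnn: "b \<in> nn_edges L"
begin

abbreviation "C \<equiv> edge_configs L"
abbreviation "N \<equiv> nn_edges L"
definition "eta0 = (SOME \<eta>. \<eta> \<in> C)"
definition "K J \<eta> = hamiltonian L J \<eta> - E eta0 \<eta>"
definition "ncr J \<longleftrightarrow> (\<forall>\<eta>\<in>C. \<forall>\<eta>'\<in>C. \<eta> \<noteq> \<eta>' \<longrightarrow> K J \<eta> \<noteq> K J \<eta>')"
definition "sp J = ground_state_b L E b 1 J"
definition "sm J = ground_state_b L E b (-1) J"

lemma finC: "finite C" using fin_ec finL by blast
lemma finN: "finite N" using fin_nn finL by blast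
lemma eta0C: "eta0 \<in> C"
proof -
  have "\<exists>\<eta>. \<eta> \<in> C" using ec_b[OF bnn, of 1] by auto
  then show ?thesis unfolding eta0_def by (rule someI_ex)
qed

lemma E_diff: "\<eta> \<in> C \<Longrightarrow> \<eta>' \<in> C \<Longrightarrow> E \<eta> \<eta>' = E eta0 \<eta>' - E eta0 \<eta>"
proof -
  assume a: "\<eta> \<in> C" "\<eta>' \<in> C"
  have "E eta0 \<eta>' = E eta0 \<eta> + E \<eta> \<eta>'" using cons eta0C a unfolding consistent_E_def by blast
  then show ?thesis by simp
qed

lemma prec_iff: "\<eta> \<in> C \<Longrightarrow> \<eta>' \<in> C \<Longrightarrow> prec L E J \<eta> \<eta>' \<longleftrightarrow> K J \<eta> < K J \<eta>'"
  by (auto simp: prec_def K_def E_diff)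

lemma K_form: "K J \<eta> = - (\<Sum>e\<in>N. J e * \<eta> e) - E eta0 \<eta>"
  by (simp add: K_def hamiltonian_def)

lemma crit_iff: "J \<in> critical_set L E \<longleftrightarrow> \<not> ncr J"
proof -
  have key: "((\<Sum>e\<in>N. J e * (\<eta> e - \<eta>' e)) = E \<eta> \<eta>') \<longleftrightarrow> K J \<eta> = K J \<eta>'"
    if "\<eta> \<in> C" "\<eta>' \<in> C" for \<eta> \<eta>'
    using that by (auto simp: K_form E_diff right_diff_distrib sum_subtractf)
  show ?thesis unfolding critical_set_def ncr_def using key by auto
qed

lemma rm_unique:
  assumes "r \<in> C" "P r" "\<forall>\<eta>\<in>C. P \<eta> \<and> \<eta> \<noteq> r \<longrightarrow> K J r < K J \<eta>"
  shows "restr_min L E J P = r"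
  unfolding restr_min_def
proof (rule the_equality)
  show "r \<in> C \<and> P r \<and> (\<forall>\<eta>'\<in>C. P \<eta>' \<and> \<eta>' \<noteq> r \<longrightarrow> prec L E J r \<eta>')"
    using assms by (simp add: prec_iff)
next
  fix x assume x: "x \<in> C \<and> P x \<and> (\<forall>\<eta>'\<in>C. P \<eta>' \<and> \<eta>' \<noteq> x \<longrightarrow> prec L E J x \<eta>')"
  show "x = r"
  proof (rule ccontr)
    assume "x \<noteq> r"
    then have "K J x < K J r" "K J r < K J x" using x assms by (auto simp: prec_iff)
    then show False by simp
  qed
qed

lemma rm_exists:
  assumes "ncr J" "\<exists>\<eta>\<in>C. P \<eta>"
  shows "\<exists>r\<in>C. P r \<and> (\<forall>\<eta>\<in>C. P \<eta> \<and> \<eta> \<noteq> r \<longrightarrow> K J r < K J \<eta>)"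
proof -
  define S where "S = {\<eta>\<in>C. P \<eta>}"
  have fS: "finite S" using finC by (simp add: S_def)
  have nS: "S \<noteq> {}" using assms(2) by (auto simp: S_def)
  have "Min (K J ` S) \<in> K J ` S" using fS nS by (intro Min_in) auto
  then obtain r where r: "r \<in> S" "K J r = Min (K J ` S)" by auto
  have "K J r < K J \<eta>" if "\<eta> \<in> C" "P \<eta>" "\<eta> \<noteq> r" for \<eta>
  proof -
    have "K J r \<le> K J \<eta>" using r fS that by (auto simp: S_def)
    moreover have "K J r \<noteq> K J \<eta>" using assms(1) that r by (auto simp: ncr_def S_def)
    ultimately show ?thesis by simp
  qed
  then show ?thesis using r by (auto simp: S_def)
qed

lemma rm_char:
  assumes "ncr J" "\<exists>\<eta>\<in>C. P \<eta>"
  shows "restr_min L E J P \<in> C \<and> P (restr_min L E J P) \<and>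
    (\<forall>\<eta>\<in>C. P \<eta> \<and> \<eta> \<noteq> restr_min L E J P \<longrightarrow> K J (restr_min L E J P) < K J \<eta>)"
proof -
  obtain r where "r \<in> C" "P r" "\<forall>\<eta>\<in>C. P \<eta> \<and> \<eta> \<noteq> r \<longrightarrow> K J r < K J \<eta>"
    using rm_exists[OF assms] by blast
  moreover then have "restr_min L E J P = r" by (intro rm_unique)
  ultimately show ?thesis by simp
qed

lemma sp_props: "ncr J \<Longrightarrow> sp J \<in> C \<and> sp J b = 1 \<and> (\<forall>\<eta>\<in>C. \<eta> b = 1 \<and> \<eta> \<noteq> sp J \<longrightarrow> K J (sp J) < K J \<eta>)"
  unfolding sp_def ground_state_b_def using ec_b[OF bnn, of 1] by (intro rm_char) auto

lemma sm_props: "ncr J \<Longrightarrow> sm J \<in> C \<and> sm J b = -1 \<and> (\<forall>\<eta>\<in>C. \<eta> b = -1 \<and> \<eta> \<noteq> sm J \<longrightarrow> K J (sm J) < K J \<eta>)"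
  unfolding sm_def ground_state_b_def using ec_b[OF bnn, of "-1"] by (intro rm_char) auto

lemma flex_eq: "ncr J \<Longrightarrow> flexibility L E b J = \<bar>K J (sp J) - K J (sm J)\<bar>"
proof -
  assume a: "ncr J"
  have m: "sp J \<in> C" "sm J \<in> C" using sp_props[OF a] sm_props[OF a] by auto
  show ?thesis unfolding flexibility_def sp_def[symmetric] sm_def[symmetric]
    using m by (simp add: K_form E_diff right_diff_distrib sum_subtractf)
qed


lemma sp_ne_sm: "ncr J \<Longrightarrow> sp J \<noteq> sm J"
  using sp_props[of J] sm_props[of J] by force

lemma local1:
  assumes "ncr J"
  shows "\<exists>\<epsilon>>0. \<forall>J'. (\<forall>e\<in>N. \<bar>J' e - J e\<bar> < \<epsilon>) \<longrightarrow>
     (\<forall>\<eta>\<in>C. \<forall>\<eta>'\<in>C. K J \<eta> < K J \<eta>' \<longrightarrow> K J' \<eta> < K J' \<eta>')"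
proof -
  have fS: "finite {(\<eta>,\<eta>'). \<eta> \<in> C \<and> \<eta>' \<in> C \<and> \<eta> \<noteq> \<eta>'}"
    by (rule finite_subset[of _ "C \<times> C"]) (auto simp: finC)
  have "\<forall>x\<in>{(\<eta>,\<eta>'). \<eta> \<in> C \<and> \<eta>' \<in> C \<and> \<eta> \<noteq> \<eta>'}. 0 < (\<lambda>(\<eta>,\<eta>'). \<bar>K J \<eta> - K J \<eta>'\<bar>) x"
    using assms by (auto simp: ncr_def)
  from fin_pos_bound[OF fS this] obtain \<delta> where d: "\<delta> > 0"
    "\<And>\<eta> \<eta>'. \<eta> \<in> C \<Longrightarrow> \<eta>' \<in> C \<Longrightarrow> \<eta> \<noteq> \<eta>' \<Longrightarrow> \<delta> \<le> \<bar>K J \<eta> - K J \<eta>'\<bar>"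
    by auto
  define \<epsilon> where "\<epsilon> = \<delta> / (2 * (real (card N) + 1))"
  have ep: "\<epsilon> > 0" using d by (simp add: \<epsilon>_def)
  have cN: "real (card N) * \<epsilon> < \<delta> / 2"
    using d by (simp add: \<epsilon>_def field_simps)
  have close: "\<bar>K J' \<eta> - K J \<eta>\<bar> < \<delta> / 2"
    if J': "\<forall>e\<in>N. \<bar>J' e - J e\<bar> < \<epsilon>" and h: "\<eta> \<in> C" for J' \<eta>
  proof -
    have "K J' \<eta> - K J \<eta> = - (\<Sum>e\<in>N. (J' e - J e) * \<eta> e)"
      by (simp add: K_form left_diff_distrib sum_subtractf)
    then have "\<bar>K J' \<eta> - K J \<eta>\<bar> = \<bar>\<Sum>e\<in>N. (J' e - J e) * \<eta> e\<bar>" by simp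
    also have "\<dots> \<le> (\<Sum>e\<in>N. \<bar>(J' e - J e) * \<eta> e\<bar>)" by (rule sum_abs)
    also have "\<dots> \<le> (\<Sum>e\<in>N. \<epsilon>)"
    proof (rule sum_mono)
      fix e assume "e \<in> N"
      have "\<bar>\<eta> e\<bar> \<le> 1" using ec_abs[OF h] .
      moreover have "\<bar>J' e - J e\<bar> < \<epsilon>" using J' \<open>e \<in> N\<close> by blast
      ultimately have "\<bar>J' e - J e\<bar> * \<bar>\<eta> e\<bar> \<le> \<epsilon> * 1"
        by (intro mult_mono) auto
      then show "\<bar>(J' e - J e) * \<eta> e\<bar> \<le> \<epsilon>" by (simp add: abs_mult)
    qed
    also have "\<dots> = real (card N) * \<epsilon>" by simp
    finally show ?thesis using cN by linarith
  qed
  show ?thesis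
  proof (intro exI[of _ \<epsilon>] conjI allI impI ballI ep)
    fix J' \<eta> \<eta>' assume J': "\<forall>e\<in>N. \<bar>J' e - J e\<bar> < \<epsilon>" and h: "\<eta> \<in> C" "\<eta>' \<in> C"
      and lt: "K J \<eta> < K J \<eta>'"
    then have "\<eta> \<noteq> \<eta>'" by auto
    then have "\<delta> \<le> \<bar>K J \<eta> - K J \<eta>'\<bar>" using d h by auto
    moreover have "\<bar>K J' \<eta> - K J \<eta>\<bar> < \<delta> / 2" "\<bar>K J' \<eta>' - K J \<eta>'\<bar> < \<delta> / 2"
      using close J' h by auto
    ultimately show "K J' \<eta> < K J' \<eta>'" using lt by (simp add: abs_if split: if_splits)
  qed
qed

definition "sgn_of J = (if K J (sp J) < K J (sm J) then -1 else (1::real))"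

lemma local2:
  assumes "ncr J"
  shows "\<exists>\<epsilon>>0. \<forall>J'. (\<forall>e\<in>N. \<bar>J' e - J e\<bar> < \<epsilon>) \<longrightarrow>
     ncr J' \<and> sp J' = sp J \<and> sm J' = sm J \<and>
     flexibility L E b J' = sgn_of J * (K J' (sp J) - K J' (sm J))"
proof -
  obtain \<epsilon> where ep: "\<epsilon> > 0" and pres: "\<And>J'. (\<forall>e\<in>N. \<bar>J' e - J e\<bar> < \<epsilon>) \<Longrightarrow>
     (\<forall>\<eta>\<in>C. \<forall>\<eta>'\<in>C. K J \<eta> < K J \<eta>' \<longrightarrow> K J' \<eta> < K J' \<eta>')"
    using local1[OF assms] by blast
  have P: "sp J \<in> C" "sp J b = 1" "\<forall>\<eta>\<in>C. \<eta> b = 1 \<and> \<eta> \<noteq> sp J \<longrightarrow> K J (sp J) < K J \<eta>"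
    using sp_props[OF assms] by auto
  have M: "sm J \<in> C" "sm J b = -1" "\<forall>\<eta>\<in>C. \<eta> b = -1 \<and> \<eta> \<noteq> sm J \<longrightarrow> K J (sm J) < K J \<eta>"
    using sm_props[OF assms] by auto
  have ne: "K J (sp J) \<noteq> K J (sm J)" using assms sp_ne_sm[OF assms] P M by (auto simp: ncr_def)
  show ?thesis
  proof (intro exI[of _ \<epsilon>] conjI allI impI ep)
    fix J' assume J': "\<forall>e\<in>N. \<bar>J' e - J e\<bar> < \<epsilon>"
    note pr = pres[OF J']
    show n': "ncr J'" unfolding ncr_def
    proof (intro ballI impI)
      fix \<eta> \<eta>' assume h: "\<eta> \<in> C" "\<eta>' \<in> C" "\<eta> \<noteq> \<eta>'"
      then have "K J \<eta> \<noteq> K J \<eta>'" using assms by (auto simp: ncr_def)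
      then have "K J \<eta> < K J \<eta>' \<or> K J \<eta>' < K J \<eta>" by linarith
      then show "K J' \<eta> \<noteq> K J' \<eta>'" using pr h by force
    qed
    show sp': "sp J' = sp J" unfolding sp_def ground_state_b_def
      using P pr by (intro rm_unique) (auto simp: sp_def ground_state_b_def)
    show sm': "sm J' = sm J" unfolding sm_def ground_state_b_def
      using M pr by (intro rm_unique) (auto simp: sm_def ground_state_b_def)
    have "K J' (sp J) < K J' (sm J)" if "K J (sp J) < K J (sm J)" using that pr P M by blast
    moreover have "K J' (sm J) < K J' (sp J)" if "\<not> K J (sp J) < K J (sm J)"
      using that ne pr P M by force
    ultimately show "flexibility L E b J' = sgn_of J * (K J' (sp J) - K J' (sm J))"
      using flex_eq[OF n'] sp' sm' by (auto simp: sgn_of_def)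
  qed
qed

lemma gs_eq: "ncr J \<Longrightarrow> ground_state L E J = (if K J (sp J) < K J (sm J) then sp J else sm J)"
proof -
  assume a: "ncr J"
  have P: "sp J \<in> C" "sp J b = 1" "\<forall>\<eta>\<in>C. \<eta> b = 1 \<and> \<eta> \<noteq> sp J \<longrightarrow> K J (sp J) < K J \<eta>"
    using sp_props[OF a] by auto
  have M: "sm J \<in> C" "sm J b = -1" "\<forall>\<eta>\<in>C. \<eta> b = -1 \<and> \<eta> \<noteq> sm J \<longrightarrow> K J (sm J) < K J \<eta>"
    using sm_props[OF a] by auto
  have ne: "K J (sp J) \<noteq> K J (sm J)" using a sp_ne_sm[OF a] P M by (auto simp: ncr_def)
  have bv: "\<eta> b = 1 \<or> \<eta> b = -1" if "\<eta> \<in> C" for \<eta> using ec_vals(1)[OF that bnn] .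
  show ?thesis unfolding ground_state_def
  proof (rule rm_unique)
    show "(if K J (sp J) < K J (sm J) then sp J else sm J) \<in> C" using P M by simp
    show "True" ..
    show "\<forall>\<eta>\<in>C. True \<and> \<eta> \<noteq> (if K J (sp J) < K J (sm J) then sp J else sm J) \<longrightarrow>
        K J (if K J (sp J) < K J (sm J) then sp J else sm J) < K J \<eta>"
    proof (intro ballI impI)
      fix \<eta> assume h: "\<eta> \<in> C" "True \<and> \<eta> \<noteq> (if K J (sp J) < K J (sm J) then sp J else sm J)"
      have A: "\<eta> b = 1 \<Longrightarrow> \<eta> \<noteq> sp J \<Longrightarrow> K J (sp J) < K J \<eta>" using P h by blast
      have B: "\<eta> b = -1 \<Longrightarrow> \<eta> \<noteq> sm J \<Longrightarrow> K J (sm J) < K J \<eta>" using M h by blast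
      show "K J (if K J (sp J) < K J (sm J) then sp J else sm J) < K J \<eta>"
        using A B bv[OF h(1)] h(2) ne by (cases "\<eta> = sp J"; cases "\<eta> = sm J"; auto split: if_splits)
    qed
  qed
qed

lemma cont_K: "continuous_on UNIV (\<lambda>J. K J \<eta>)"
  unfolding K_form by (intro continuous_intros continuous_on_product_coordinates)

end

theorem lemma2p7:
  fixes lo hi :: "int ^ 'd::finite"
    and E :: "'d econf \<Rightarrow> 'd econf \<Rightarrow> real"
    and b :: "'d edge"
  assumes E: "consistent_E (zbox lo hi) E"
    and b: "b \<in> nn_edges (zbox lo hi)"
  shows "piecewise_affine_on (zbox lo hi)
           (coupling_space (zbox lo hi) - critical_set (zbox lo hi) E)
           (flexibility (zbox lo hi) E b)
       \<and> (\<forall>J\<in>coupling_space (zbox lo hi) - critical_set (zbox lo hi) E.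
            \<forall>e\<in>nn_edges (zbox lo hi).
              ((\<lambda>t. flexibility (zbox lo hi) E b (\<lambda>e'. J e' + (if e' = e then t else 0)))
                 has_real_derivative
                 (if e \<in> droplet_boundary (zbox lo hi) E b J
                  then 2 * ground_state (zbox lo hi) E J e else 0)) (at 0))
       \<and> (\<exists>G. continuous_on (coupling_space (zbox lo hi)) G \<and>
              (\<forall>J\<in>coupling_space (zbox lo hi) - critical_set (zbox lo hi) E.
                 G J = flexibility (zbox lo hi) E b J))
       \<and> (\<forall>G1 G2. continuous_on (coupling_space (zbox lo hi)) G1 \<and>
                 (\<forall>J\<in>coupling_space (zbox lo hi) - critical_set (zbox lo hi) E.
                    G1 J = flexibility (zbox lo hi) E b J) \<and>
                 continuous_on (coupling_space (zbox lo hi)) G2 \<and>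
                 (\<forall>J\<in>coupling_space (zbox lo hi) - critical_set (zbox lo hi) E.
                    G2 J = flexibility (zbox lo hi) E b J)
              \<longrightarrow> (\<forall>J\<in>coupling_space (zbox lo hi). G1 J = G2 J))"
proof -
  let ?L = "zbox lo hi"
  interpret F: flexctx ?L E b using fin_zbox E b by unfold_locales auto
  let ?U = "coupling_space ?L - critical_set ?L E"
  have ncrU: "F.ncr J" if "J \<in> ?U" for J using that F.crit_iff by auto
  define A where "A = (\<lambda>(s,\<eta>,\<eta>'). ((\<lambda>e. - s * (\<eta> e - \<eta>' e)), s * (E F.eta0 \<eta>' - E F.eta0 \<eta>)))
      ` ({1,-1::real} \<times> F.C \<times> F.C)"
  have P1: "piecewise_affine_on ?L ?U (flexibility ?L E b)"
    unfolding piecewise_affine_on_def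
  proof (intro exI[of _ A] conjI ballI)
    show "finite A" unfolding A_def using F.finC by auto
    fix J assume J: "J \<in> ?U"
    note n = ncrU[OF J]
    obtain \<epsilon> where ep: "\<epsilon> > 0" and loc: "\<And>J'. (\<forall>e\<in>F.N. \<bar>J' e - J e\<bar> < \<epsilon>) \<Longrightarrow>
      F.ncr J' \<and> F.sp J' = F.sp J \<and> F.sm J' = F.sm J \<and>
      flexibility ?L E b J' = F.sgn_of J * (F.K J' (F.sp J) - F.K J' (F.sm J))"
      using F.local2[OF n] by blast
    define s where "s = F.sgn_of J"
    define g where "g = (\<lambda>e. - s * (F.sp J e - F.sm J e))"
    define c where "c = s * (E F.eta0 (F.sm J) - E F.eta0 (F.sp J))"
    have "(s, F.sp J, F.sm J) \<in> {1,-1::real} \<times> F.C \<times> F.C"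
      using F.sp_props[OF n] F.sm_props[OF n] by (simp add: s_def F.sgn_of_def)
    moreover have "(g, c) = (\<lambda>(s,\<eta>,\<eta>'). ((\<lambda>e. - s * (\<eta> e - \<eta>' e)), s * (E F.eta0 \<eta>' - E F.eta0 \<eta>))) (s, F.sp J, F.sm J)"
      by (simp add: g_def c_def)
    ultimately have "(g, c) \<in> A" unfolding A_def by (rule rev_image_eqI)
    moreover have "\<forall>J'\<in>?U. (\<forall>e\<in>F.N. \<bar>J' e - J e\<bar> < \<epsilon>) \<longrightarrow>
         flexibility ?L E b J' = c + (\<Sum>e\<in>F.N. g e * J' e)"
    proof (intro ballI impI)
      fix J' assume "J' \<in> ?U" "\<forall>e\<in>F.N. \<bar>J' e - J e\<bar> < \<epsilon>"
      then have "flexibility ?L E b J' = s * (F.K J' (F.sp J) - F.K J' (F.sm J))"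
        using loc s_def by blast
      also have "\<dots> = c + (\<Sum>e\<in>F.N. g e * J' e)"
        unfolding F.K_form c_def g_def
        by (simp add: sum_subtractf sum_distrib_left algebra_simps)
      finally show "flexibility ?L E b J' = c + (\<Sum>e\<in>F.N. g e * J' e)" .
    qed
    ultimately show "\<exists>\<epsilon>>0. \<exists>(g, c)\<in>A. \<forall>J'\<in>?U. (\<forall>e\<in>F.N. \<bar>J' e - J e\<bar> < \<epsilon>) \<longrightarrow>
         flexibility ?L E b J' = c + (\<Sum>e\<in>F.N. g e * J' e)"
      using ep by blast
  qed
  have P2: "((\<lambda>t. flexibility ?L E b (\<lambda>e'. J e' + (if e' = e then t else 0))) has_real_derivative
        (if e \<in> droplet_boundary ?L E b J then 2 * ground_state ?L E J e else 0)) (at 0)"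
    if J: "J \<in> ?U" and e: "e \<in> F.N" for J e
  proof -
    note n = ncrU[OF J]
    obtain \<epsilon> where ep: "\<epsilon> > 0" and loc: "\<And>J'. (\<forall>e\<in>F.N. \<bar>J' e - J e\<bar> < \<epsilon>) \<Longrightarrow>
      F.ncr J' \<and> F.sp J' = F.sp J \<and> F.sm J' = F.sm J \<and>
      flexibility ?L E b J' = F.sgn_of J * (F.K J' (F.sp J) - F.K J' (F.sm J))"
      using F.local2[OF n] by blast
    define s where "s = F.sgn_of J"
    define p where "p = F.sp J"
    define m where "m = F.sm J"
    define Jt where "Jt = (\<lambda>t e'. J e' + (if e' = e then t else (0::real)))"
    have Kt: "F.K (Jt t) \<eta> = F.K J \<eta> - t * \<eta> e" for t \<eta>
    proof -
      have pt: "Jt t e' * \<eta> e' = J e' * \<eta> e' + (if e' = e then t else 0) * \<eta> e'" for e'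
        unfolding Jt_def by (rule distrib_right)
      have "(\<Sum>e'\<in>F.N. Jt t e' * \<eta> e') = (\<Sum>e'\<in>F.N. J e' * \<eta> e' + (if e' = e then t else 0) * \<eta> e')"
        by (rule sum.cong[OF refl pt])
      also have "\<dots> = (\<Sum>e'\<in>F.N. J e' * \<eta> e') + (\<Sum>e'\<in>F.N. (if e' = e then t else 0) * \<eta> e')"
        by (rule sum.distrib)
      also have "\<dots> = (\<Sum>e'\<in>F.N. J e' * \<eta> e') + t * \<eta> e"
        by (simp only: sum_delta_mult[OF F.finN e])
      finally have "(\<Sum>e'\<in>F.N. Jt t e' * \<eta> e') = (\<Sum>e'\<in>F.N. J e' * \<eta> e') + t * \<eta> e" .
      then show ?thesis unfolding F.K_form by linarith
    qed
    have eq: "flexibility ?L E b (Jt t) = s * (F.K J p - F.K J m) - s * (p e - m e) * t"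
      if "t \<in> ball 0 \<epsilon>" for t
    proof -
      have "\<forall>e'\<in>F.N. \<bar>Jt t e' - J e'\<bar> < \<epsilon>" using that ep by (auto simp: Jt_def dist_norm)
      then have "flexibility ?L E b (Jt t) = s * (F.K (Jt t) p - F.K (Jt t) m)"
        using loc s_def p_def m_def by blast
      then show ?thesis unfolding Kt by (simp add: algebra_simps)
    qed
    have d0: "((\<lambda>t. s * (F.K J p - F.K J m) - s * (p e - m e) * t) has_real_derivative
        (- s * (p e - m e))) (at 0)"
      by (auto intro!: derivative_eq_intros)
    have d1: "((\<lambda>t. flexibility ?L E b (Jt t)) has_real_derivative (- s * (p e - m e))) (at 0)"
      by (rule has_field_derivative_transform_within_open[OF d0, of "ball 0 \<epsilon>"]) (use ep eq in auto)
    have pv: "p e = 1 \<or> p e = -1" "m e = 1 \<or> m e = -1"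
      using F.sp_props[OF n] F.sm_props[OF n] ec_vals(1) e unfolding p_def m_def by blast+
    have gs: "ground_state ?L E J = (if F.K J p < F.K J m then p else m)"
      using F.gs_eq[OF n] p_def m_def by simp
    have db: "e \<in> droplet_boundary ?L E b J \<longleftrightarrow> p e \<noteq> m e"
      using e by (simp add: droplet_boundary_def p_def m_def F.sp_def F.sm_def)
    have "- s * (p e - m e) = (if e \<in> droplet_boundary ?L E b J then 2 * ground_state ?L E J e else 0)"
      unfolding db gs s_def F.sgn_of_def p_def[symmetric] m_def[symmetric] using pv by auto
    then show ?thesis using d1 unfolding Jt_def by simp
  qed
  define Cp where "Cp = {\<eta>\<in>F.C. \<eta> b = 1}"
  define Cm where "Cm = {\<eta>\<in>F.C. \<eta> b = -1}"
  define G where "G = (\<lambda>J. \<bar>Min ((\<lambda>\<eta>. F.K J \<eta>) ` Cp) - Min ((\<lambda>\<eta>. F.K J \<eta>) ` Cm)\<bar>)"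
  have fCp: "finite Cp" "Cp \<noteq> {}" using F.finC ec_b[OF b, of 1] by (auto simp: Cp_def)
  have fCm: "finite Cm" "Cm \<noteq> {}" using F.finC ec_b[OF b, of "-1"] by (auto simp: Cm_def)
  have "continuous_on UNIV G" unfolding G_def
    by (intro continuous_intros cont_Min[where f = "\<lambda>J \<eta>. F.K J \<eta>"] fCp fCm ballI F.cont_K)
  then have cG: "continuous_on (coupling_space ?L) G" by (rule continuous_on_subset) auto
  have GF: "G J = flexibility ?L E b J" if J: "J \<in> ?U" for J
  proof -
    note n = ncrU[OF J]
    have "Min ((\<lambda>\<eta>. F.K J \<eta>) ` Cp) = F.K J (F.sp J)"
    proof (rule Min_eqI)
      show "finite ((\<lambda>\<eta>. F.K J \<eta>) ` Cp)" using fCp by simp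
      show "F.K J (F.sp J) \<in> (\<lambda>\<eta>. F.K J \<eta>) ` Cp" using F.sp_props[OF n] by (auto simp: Cp_def)
      fix y assume "y \<in> (\<lambda>\<eta>. F.K J \<eta>) ` Cp"
      then obtain \<eta> where h: "\<eta> \<in> Cp" "y = F.K J \<eta>" by blast
      show "F.K J (F.sp J) \<le> y"
      proof (cases "\<eta> = F.sp J")
        case True then show ?thesis using h by simp
      next
        case False
        have "\<eta> \<in> F.C" "\<eta> b = 1" using h(1) by (auto simp: Cp_def)
        then have "F.K J (F.sp J) < F.K J \<eta>" using F.sp_props[OF n] False by blast
        then show ?thesis using h by simp
      qed
    qed
    moreover have "Min ((\<lambda>\<eta>. F.K J \<eta>) ` Cm) = F.K J (F.sm J)"
    proof (rule Min_eqI)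
      show "finite ((\<lambda>\<eta>. F.K J \<eta>) ` Cm)" using fCm by simp
      show "F.K J (F.sm J) \<in> (\<lambda>\<eta>. F.K J \<eta>) ` Cm" using F.sm_props[OF n] by (auto simp: Cm_def)
      fix y assume "y \<in> (\<lambda>\<eta>. F.K J \<eta>) ` Cm"
      then obtain \<eta> where h: "\<eta> \<in> Cm" "y = F.K J \<eta>" by blast
      show "F.K J (F.sm J) \<le> y"
      proof (cases "\<eta> = F.sm J")
        case True then show ?thesis using h by simp
      next
        case False
        have "\<eta> \<in> F.C" "\<eta> b = -1" using h(1) by (auto simp: Cm_def)
        then have "F.K J (F.sm J) < F.K J \<eta>" using F.sm_props[OF n] False by blast
        then show ?thesis using h by simp
      qed
    qed
    ultimately show ?thesis unfolding G_def F.flex_eq[OF n] by simp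
  qed
  have P4: "G1 J = G2 J"
    if c1: "continuous_on (coupling_space ?L) G1" and e1: "\<forall>J\<in>?U. G1 J = flexibility ?L E b J"
      and c2: "continuous_on (coupling_space ?L) G2" and e2: "\<forall>J\<in>?U. G2 J = flexibility ?L E b J"
      and J: "J \<in> coupling_space ?L" for G1 G2 J
  proof (rule ccontr)
    assume ne: "G1 J \<noteq> G2 J"
    have "continuous_on (coupling_space ?L) (\<lambda>x. G1 x - G2 x)" using c1 c2 by (intro continuous_intros)
    then obtain O1 where O1: "open O1" "O1 \<inter> coupling_space ?L = (\<lambda>x. G1 x - G2 x) -` (- {0}) \<inter> coupling_space ?L"
      unfolding continuous_on_open_invariant by (metis open_Compl closed_singleton)
    have "J \<in> O1 \<inter> coupling_space ?L" unfolding O1(2) using ne J by simp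
    then have JO: "J \<in> O1" by simp
    define Pr where "Pr = (\<lambda>(\<eta>, \<eta>'). ((\<lambda>e. \<eta> e - \<eta>' e), E \<eta> \<eta>')) ` {(\<eta>, \<eta>'). \<eta> \<in> F.C \<and> \<eta>' \<in> F.C \<and> \<eta> \<noteq> \<eta>'}"
    have fPr: "finite Pr" unfolding Pr_def
      by (rule finite_imageI, rule finite_subset[of _ "F.C \<times> F.C"]) (auto simp: F.finC)
    have nzPr: "\<forall>(d,c)\<in>Pr. \<exists>e\<in>F.N. d e \<noteq> 0"
    proof (clarsimp simp: Pr_def)
      fix \<eta> \<eta>' assume h: "\<eta> \<in> F.C" "\<eta>' \<in> F.C" "\<eta> \<noteq> \<eta>'"
      then obtain e where "\<eta> e \<noteq> \<eta>' e" by (auto simp: fun_eq_iff)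
      moreover have "e \<in> F.N"
      proof (rule ccontr)
        assume "e \<notin> F.N"
        then have "\<eta> e = 0" "\<eta>' e = 0" using ec_vals(2)[OF h(1)] ec_vals(2)[OF h(2)] by blast+
        then show False using \<open>\<eta> e \<noteq> \<eta>' e\<close> by simp
      qed
      ultimately show "\<exists>e\<in>F.N. \<eta> e \<noteq> \<eta>' e" by blast
    qed
    have Jcs: "\<forall>e. e \<notin> F.N \<longrightarrow> J e = 0" using J by (simp add: coupling_space_def)
    obtain J' where J': "J' \<in> O1" "\<forall>e. e \<notin> F.N \<longrightarrow> J' e = 0"
      "\<forall>(d,c)\<in>Pr. (\<Sum>e\<in>F.N. J' e * d e) \<noteq> c"
      using dense_avoid[OF fPr nzPr F.finN O1(1) JO Jcs] by blast
    have J'cs: "J' \<in> coupling_space ?L" using J'(2) by (simp add: coupling_space_def)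
    have "J' \<notin> critical_set ?L E"
    proof
      assume "J' \<in> critical_set ?L E"
      then obtain \<eta> \<eta>' where h: "\<eta> \<in> F.C" "\<eta>' \<in> F.C" "\<eta> \<noteq> \<eta>'"
        "(\<Sum>e\<in>F.N. J' e * (\<eta> e - \<eta>' e)) = E \<eta> \<eta>'" by (auto simp: critical_set_def)
      have "((\<lambda>e. \<eta> e - \<eta>' e), E \<eta> \<eta>') \<in> Pr" unfolding Pr_def using h(1-3) by auto
      then show False using J'(3) h(4) by fastforce
    qed
    then have "G1 J' = G2 J'" using e1 e2 J'cs by auto
    moreover have "J' \<in> (\<lambda>x. G1 x - G2 x) -` (- {0}) \<inter> coupling_space ?L"
      unfolding O1(2)[symmetric] using J'(1) J'cs by simp
    ultimately show False by simp
  qed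
  show ?thesis
    using P1 P2 P4 GF cG by blast
qed

end
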